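(* Let $\gamma\geq0$, $G=(V,E,\omega)\in\mathcal C_\gamma$, and let $V'$ be a proper subset of $V$. Assume $u,v\in\mathcal V$ satisfy $(Lu)_i\geq(Lv)_i$ for all $i\in V'$ and $u_i\geq v_i$ for all $i\in V\setminus V'$. Then $u_i\geq v_i$ for all $i\in V$.
   Context: $\mathcal{G}$ is the set of finite, simple, connected, undirected, edge-weighted graphs $G=(V,E,\omega)$ with $V=\{1,\dots,n\}$, $n\geq2$, weights $\omega_{ij}=\omega_{ji}>0$ on edges, $0$ otherwise. $d_i=\sum_j\omega_{ij}$. $\mathcal V$: functions $V\to\mathbb R$. Fixed $r\in[0,1]$: $(\Delta u)_i=d_i^{-r}\sum_j\omega_{ij}(u_i-u_j)$, $\mathcal M(u)=\sum_id_i^ru_i$, $\mathrm{vol}(V)=\sum_id_i^r$, $\mathcal A(u)=\frac{\mathcal M(u)}{\mathrm{vol}(V)}\chi_V$. For $u\in\mathcal V$ let $\varphi$ be the unique solution of $\Delta\varphi=u-\mathcal A(u)$, $\mathcal M(\varphi)=0$, and $Lu:=\Delta u+\gamma\varphi$. For a proper subset $S\subsetneq V$, the equilibrium measure $\nu^S$ is the unique $\nu\in\mathcal V$ with $(\Delta\nu)_i=1$ on $S$ and $\nu_i=0$ off $S$. $f^j:=\nu^{V\setminus\{j\}}-\mathcal A(\nu^{V\setminus\{j\}})$. $\mathcal C^0=\{G\in\mathcal G:\forall j\ \forall i\neq j:\ \omega_{ij}>0\text{ or }f^j_i\geq0\}$; for $\gamma>0$, $\mathcal C_\gamma=\{G\in\mathcal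 C^0:\forall j\ \forall i\neq j:\ \omega_{ij}=0\text{ or }d_i^{-r}\omega_{ij}+\gamma\frac{d_j^r}{\mathrm{vol}(V)}f^j_i>0\}$; $\mathcal C_0:=\mathcal G$. *)

theory Defs
  imports "HOL-Analysis.Analysis"
begin

text \<open>A weighted graph on vertex set V = {1..n} is given by a weight function
  w :: nat => nat => real; only values on V x V matter. The exponent r is a parameter.\<close>

definition Vset :: "nat \<Rightarrow> nat set" where
  "Vset n = {1..n}"

definition is_graph :: "nat \<Rightarrow> (nat \<Rightarrow> nat \<Rightarrow> real) \<Rightarrow> bool" where
  "is_graph n w \<longleftrightarrow> n \<ge> 2
     \<and> (\<forall>i\<in>Vset n. \<forall>j\<in>Vset n. w i j = w j i \<and> w i j \<ge> 0)
     \<and> (\<forall>i\<in>Vset n. w i i = 0)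
     \<and> (\<forall>i\<in>Vset n. \<forall>j\<in>Vset n.
          (i, j) \<in> ({(a, b). a \<in> Vset n \<and> b \<in> Vset n \<and> w a b > 0})\<^sup>*)"

definition deg :: "nat \<Rightarrow> (nat \<Rightarrow> nat \<Rightarrow> real) \<Rightarrow> nat \<Rightarrow> real" where
  "deg n w i = (\<Sum>j\<in>Vset n. w i j)"

definition lap :: "nat \<Rightarrow> (nat \<Rightarrow> nat \<Rightarrow> real) \<Rightarrow> real \<Rightarrow> (nat \<Rightarrow> real) \<Rightarrow> nat \<Rightarrow> real" where
  "lap n w r u i = deg n w i powr (- r) * (\<Sum>j\<in>Vset n. w i j * (u i - u j))"

definition mass :: "nat \<Rightarrow> (nat \<Rightarrow> nat \<Rightarrow> real) \<Rightarrow> real \<Rightarrow> (nat \<Rightarrow> real) \<Rightarrow> real" where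
  "mass n w r u = (\<Sum>i\<in>Vset n. deg n w i powr r * u i)"

definition vol :: "nat \<Rightarrow> (nat \<Rightarrow> nat \<Rightarrow> real) \<Rightarrow> real \<Rightarrow> real" where
  "vol n w r = (\<Sum>i\<in>Vset n. deg n w i powr r)"

definition avg :: "nat \<Rightarrow> (nat \<Rightarrow> nat \<Rightarrow> real) \<Rightarrow> real \<Rightarrow> (nat \<Rightarrow> real) \<Rightarrow> nat \<Rightarrow> real" where
  "avg n w r u = (\<lambda>i. if i \<in> Vset n then mass n w r u / vol n w r else 0)"

text \<open>phi: the unique solution of Delta phi = u - A(u) on V, M(phi) = 0
  (functions are normalised to be 0 outside V so that THE is well-defined).\<close>
definition phi :: "nat \<Rightarrow> (nat \<Rightarrow> nat \<Rightarrow> real) \<Rightarrow> real \<Rightarrow> (nat \<Rightarrow> real) \<Rightarrow> nat \<Rightarrow> real" where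
  "phi n w r u = (THE p. (\<forall>i\<in>Vset n. lap n w r p i = u i - avg n w r u i)
                        \<and> mass n w r p = 0 \<and> (\<forall>i. i \<notin> Vset n \<longrightarrow> p i = 0))"

definition Lop :: "nat \<Rightarrow> (nat \<Rightarrow> nat \<Rightarrow> real) \<Rightarrow> real \<Rightarrow> real \<Rightarrow> (nat \<Rightarrow> real) \<Rightarrow> nat \<Rightarrow> real" where
  "Lop n w r \<gamma> u i = lap n w r u i + \<gamma> * phi n w r u i"

definition eqmeas :: "nat \<Rightarrow> (nat \<Rightarrow> nat \<Rightarrow> real) \<Rightarrow> real \<Rightarrow> nat set \<Rightarrow> nat \<Rightarrow> real" where
  "eqmeas n w r S = (THE \<nu>. (\<forall>i\<in>S. lap n w r \<nu> i = 1) \<and> (\<forall>i. i \<notin> S \<longrightarrow> \<nu> i = 0))"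

definition fj :: "nat \<Rightarrow> (nat \<Rightarrow> nat \<Rightarrow> real) \<Rightarrow> real \<Rightarrow> nat \<Rightarrow> nat \<Rightarrow> real" where
  "fj n w r j = (let \<nu> = eqmeas n w r (Vset n - {j}) in (\<lambda>i. \<nu> i - avg n w r \<nu> i))"

definition classC0 :: "nat \<Rightarrow> (nat \<Rightarrow> nat \<Rightarrow> real) \<Rightarrow> real \<Rightarrow> bool" where
  "classC0 n w r \<longleftrightarrow> is_graph n w \<and>
     (\<forall>j\<in>Vset n. \<forall>i\<in>Vset n. i \<noteq> j \<longrightarrow> w i j > 0 \<or> fj n w r j i \<ge> 0)"

definition classC :: "nat \<Rightarrow> (nat \<Rightarrow> nat \<Rightarrow> real) \<Rightarrow> real \<Rightarrow> real \<Rightarrow> bool" where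
  "classC n w r \<gamma> \<longleftrightarrow>
     (if \<gamma> = 0 then is_graph n w
      else classC0 n w r \<and>
        (\<forall>j\<in>Vset n. \<forall>i\<in>Vset n. i \<noteq> j \<longrightarrow>
           w i j = 0 \<or> deg n w i powr (- r) * w i j
                        + \<gamma> * deg n w j powr r / vol n w r * fj n w r j i > 0))"

end

theory Submission imports Defs "Jordan_Normal_Form.Determinant" begin

lemma sum_V_shift: "(\<Sum>k\<in>Vset n. F k) = (\<Sum>b<n. F (Suc b))"
proof -
  have "(\<Sum>b<n. F (Suc b)) = sum F (Suc ` {..<n})"
    by (simp add: sum.reindex)
  then show ?thesis by (simp add: Vset_def image_Suc_lessThan)
qed

lemma finite_V[simp]: "finite (Vset n)" by (simp add: Vset_def)

lemma pw_inv: "(x::real) > 0 \<Longrightarrow> x powr r * x powr (-r) = 1"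
  by (simp add: powr_minus)

lemma exists_min:
  fixes g :: "nat \<Rightarrow> real"
  assumes "finite A" "A \<noteq> {}"
  shows "\<exists>i\<in>A. \<forall>k\<in>A. g i \<le> g k"
proof -
  have "Min (g ` A) \<in> g ` A" using assms by (intro Min_in) auto
  then obtain i where i: "i \<in> A" "g i = Min (g ` A)" by auto
  have "\<forall>k\<in>A. g i \<le> g k"
  proof
    fix k assume "k \<in> A"
    then have "Min (g ` A) \<le> g k" by (intro Min_le) (use assms in auto)
    then show "g i \<le> g k" using i(2) by linarith
  qed
  then show ?thesis using i by blast
qed

locale gr =
  fixes n :: nat and w :: "nat \<Rightarrow> nat \<Rightarrow> real" and r :: real
  assumes G: "is_graph n w"
begin

abbreviation V where "V \<equiv> Vset n"
abbreviation E where "E \<equiv> {(a, b). a \<in> Vset n \<and> b \<in> Vset n \<and> w a b > 0}"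

lemma n2: "n \<ge> 2" using G unfolding is_graph_def by auto
lemma wsym: "i\<in>V \<Longrightarrow> j\<in>V \<Longrightarrow> w i j = w j i" using G unfolding is_graph_def by auto
lemma wnn: "i\<in>V \<Longrightarrow> j\<in>V \<Longrightarrow> w i j \<ge> 0" using G unfolding is_graph_def by auto
lemma wdiag: "i\<in>V \<Longrightarrow> w i i = 0" using G unfolding is_graph_def by auto
lemma conn: "i\<in>V \<Longrightarrow> j\<in>V \<Longrightarrow> (i, j) \<in> E\<^sup>*" using G unfolding is_graph_def by auto

lemma deg_pos: assumes i: "i \<in> V" shows "deg n w i > 0"
proof -
  define j where "j = (if i = 1 then 2 else (1::nat))"
  have j: "j \<in> V" "j \<noteq> i" using i n2 by (auto simp: Vset_def j_def)
  have ij: "(i, j) \<in> E\<^sup>*" using conn[OF i j(1)] .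
  have "\<exists>k. (i,k) \<in> E" using ij j(2) by (cases rule: converse_rtranclE) auto
  then obtain k where k: "(i,k) \<in> E" by blast
  then have kV: "k \<in> V" and wk: "w i k > 0" by auto
  have "w i k \<le> deg n w i" unfolding deg_def
    by (rule member_le_sum[OF kV]) (use wnn i in auto)
  then show ?thesis using wk by simp
qed

lemma vol_pos: "vol n w r > 0"
proof -
  have "V \<noteq> {}" using n2 by (auto simp: Vset_def)
  moreover have "\<forall>i\<in>V. deg n w i powr r > 0"
  proof
    fix i assume "i \<in> V"
    hence "deg n w i > 0" by (rule deg_pos)
    thus "deg n w i powr r > 0" by simp
  qed
  ultimately show ?thesis unfolding vol_def by (intro sum_pos) auto
qed

lemma spread:
  assumes cnn: "\<forall>i\<in>V. \<forall>k\<in>V. i \<noteq> k \<longrightarrow> 0 \<le> c i k"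
    and cpos: "\<forall>i\<in>V. \<forall>k\<in>V. 0 < w i k \<longrightarrow> 0 < c i k"
    and i0: "i0 \<in> V" "\<forall>k\<in>V. g i0 \<le> (g k::real)"
    and sup: "\<forall>i\<in>V. (\<forall>k\<in>V. g i \<le> g k) \<longrightarrow> (\<Sum>k\<in>V. c i k * (g k - g i)) \<le> 0"
  shows "\<forall>j\<in>V. g j = g i0"
proof
  fix j assume j: "j \<in> V"
  have stp: "g z = g i0" if y: "y \<in> V" "g y = g i0" and z: "z\<in>V" "w y z > 0" for y z
  proof -
    have ymin: "\<forall>k\<in>V. g y \<le> g k" using y i0 by simp
    have nn: "\<forall>k\<in>V. 0 \<le> c y k * (g k - g y)"
    proof
      fix k assume k: "k \<in> V"
      show "0 \<le> c y k * (g k - g y)"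
      proof (cases "k = y")
        case True then show ?thesis by simp
      next
        case False then show ?thesis using cnn y k ymin by (simp add: mult_nonneg_nonneg)
      qed
    qed
    have le: "(\<Sum>k\<in>V. c y k * (g k - g y)) \<le> 0" using sup y ymin by blast
    have "(\<Sum>k\<in>V. c y k * (g k - g y)) = 0" using le nn by (meson antisym sum_nonneg)
    with nn have "\<forall>k\<in>V. c y k * (g k - g y) = 0"
      using sum_nonneg_eq_0_iff[of V "\<lambda>k. c y k * (g k - g y)"] by simp
    then have "c y z * (g z - g y) = 0" using z by blast
    moreover have "c y z > 0" using cpos y z by blast
    ultimately show ?thesis using y by simp
  qed
  have "(i0, j) \<in> E\<^sup>*" using conn[OF i0(1) j] .
  then have "g j = g i0 \<and> j \<in> V"
  proof (induct rule: rtrancl_induct)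
    case base then show ?case using i0 by simp
  next
    case (step y z)
    then have yz: "y \<in> V" "g y = g i0" "z \<in> V" "w y z > 0" by auto
    show ?case using stp[OF yz] yz(3) by simp
  qed
  then show "g j = g i0" by simp
qed

lemma maxprin:
  assumes cnn: "\<forall>i\<in>V. \<forall>k\<in>V. i \<noteq> k \<longrightarrow> 0 \<le> c i k"
    and cpos: "\<forall>i\<in>V. \<forall>k\<in>V. 0 < w i k \<longrightarrow> 0 < c i k"
    and T: "V - T \<noteq> {}"
    and sup: "\<forall>i\<in>T \<inter> V. (\<Sum>k\<in>V. c i k * (g k - g i)) \<le> 0"
    and bd: "\<forall>i\<in>V - T. 0 \<le> (g i::real)"
  shows "\<forall>i\<in>V. 0 \<le> g i"
proof (rule ccontr)
  assume "\<not> ?thesis"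
  then obtain j where j: "j \<in> V" "g j < 0" by (auto simp: not_le)
  obtain i0 where i0: "i0 \<in> V" "\<forall>k\<in>V. g i0 \<le> g k"
    using exists_min[of V g] j by auto
  have "g i0 \<le> g j" using i0 j by blast
  hence neg: "g i0 < 0" using j by simp
  have all: "\<forall>j\<in>V. g j = g i0"
  proof (rule spread[OF cnn cpos i0])
    show "\<forall>i\<in>V. (\<forall>k\<in>V. g i \<le> g k) \<longrightarrow> (\<Sum>k\<in>V. c i k * (g k - g i)) \<le> 0"
    proof (intro ballI impI)
      fix i assume i: "i \<in> V" and imin: "\<forall>k\<in>V. g i \<le> g k"
      have "g i \<le> g i0" using imin i0 by blast
      hence "g i < 0" using neg by simp
      hence "i \<in> T" using bd i by (meson DiffI not_le)
      thus "(\<Sum>k\<in>V. c i k * (g k - g i)) \<le> 0" using sup i by blast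
    qed
  qed
  obtain b where b: "b \<in> V - T" using T by blast
  have "g b = g i0" using all b by blast
  moreover have "0 \<le> g b" using bd b by blast
  ultimately show False using neg by simp
qed

lemma harm_zero:
  assumes T: "V - T \<noteq> {}"
    and h: "\<forall>i\<in>T \<inter> V. (\<Sum>k\<in>V. w i k * (g k - g i)) = 0"
    and bd: "\<forall>i\<in>V - T. g i = (0::real)"
  shows "\<forall>i\<in>V. g i = 0"
proof -
  have cnn: "\<forall>i\<in>V. \<forall>k\<in>V. i \<noteq> k \<longrightarrow> 0 \<le> w i k" using wnn by auto
  have cpos: "\<forall>i\<in>V. \<forall>k\<in>V. 0 < w i k \<longrightarrow> 0 < w i k" by auto
  have p1: "\<forall>i\<in>V. 0 \<le> g i" by (rule maxprin[OF cnn cpos T]) (use h bd in auto)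
  have p2: "\<forall>i\<in>V. 0 \<le> - g i"
  proof (rule maxprin[OF cnn cpos T])
    show "\<forall>i\<in>T \<inter> V. (\<Sum>k\<in>V. w i k * (- g k - - g i)) \<le> 0"
    proof
      fix i assume i: "i \<in> T \<inter> V"
      have "(\<Sum>k\<in>V. w i k * (- g k - - g i)) = - (\<Sum>k\<in>V. w i k * (g k - g i))"
        unfolding sum_negf[symmetric] by (rule sum.cong) (simp_all add: algebra_simps)
      then show "(\<Sum>k\<in>V. w i k * (- g k - - g i)) \<le> 0" using h i by simp
    qed
  qed (use bd in auto)
  show ?thesis
  proof
    fix i assume "i \<in> V"
    with p1 p2 have "0 \<le> g i" "0 \<le> - g i" by auto
    thus "g i = 0" by simp
  qed
qed

lemma dpow_pos: "i \<in> V \<Longrightarrow> deg n w i powr a > 0"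
  using deg_pos[of i] by simp

lemma lap_expand: "lap n w r g i = deg n w i powr (-r) * (deg n w i * g i - (\<Sum>k\<in>V. w i k * g k))"
  unfolding lap_def deg_def by (simp add: right_diff_distrib sum_subtractf sum_distrib_right)

lemma lap_cong: "i \<in> V \<Longrightarrow> \<forall>k\<in>V. f k = h k \<Longrightarrow> lap n w r f i = lap n w r h i"
  unfolding lap_def by (intro arg_cong[where f="\<lambda>x. _ * x"] sum.cong) auto

lemma lap_diff: "lap n w r (\<lambda>x. f x - h x) i = lap n w r f i - lap n w r h i"
  unfolding lap_def by (simp add: sum_subtractf[symmetric] right_diff_distrib[symmetric] algebra_simps)

lemma lap_const: "i \<in> V \<Longrightarrow> \<forall>k\<in>V. f k = c \<Longrightarrow> lap n w r f i = 0"
  unfolding lap_def by simp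

lemma lap_lin: "lap n w r (\<lambda>x. \<Sum>j\<in>V. a j * F j x) i = (\<Sum>j\<in>V. a j * lap n w r (F j) i)"
proof -
  have "(\<Sum>k\<in>V. w i k * ((\<Sum>j\<in>V. a j * F j i) - (\<Sum>j\<in>V. a j * F j k)))
      = (\<Sum>k\<in>V. \<Sum>j\<in>V. a j * (w i k * (F j i - F j k)))"
    by (rule sum.cong) (simp_all add: sum_subtractf[symmetric] sum_distrib_left algebra_simps)
  also have "\<dots> = (\<Sum>j\<in>V. \<Sum>k\<in>V. a j * (w i k * (F j i - F j k)))" by (rule sum.swap)
  finally have calc: "(\<Sum>k\<in>V. w i k * ((\<Sum>j\<in>V. a j * F j i) - (\<Sum>j\<in>V. a j * F j k)))
      = (\<Sum>j\<in>V. \<Sum>k\<in>V. a j * (w i k * (F j i - F j k)))" .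
  have "lap n w r (\<lambda>x. \<Sum>j\<in>V. a j * F j x) i
      = deg n w i powr (-r) * (\<Sum>j\<in>V. \<Sum>k\<in>V. a j * (w i k * (F j i - F j k)))"
    unfolding lap_def by (simp only: calc)
  also have "\<dots> = (\<Sum>j\<in>V. a j * (deg n w i powr (-r) * (\<Sum>k\<in>V. w i k * (F j i - F j k))))"
    by (simp add: sum_distrib_left mult_ac)
  finally show ?thesis unfolding lap_def .
qed

lemma lap_zero_iff: "i \<in> V \<Longrightarrow> lap n w r g i = 0 \<longleftrightarrow> (\<Sum>k\<in>V. w i k * (g k - g i)) = 0"
proof -
  assume i: "i \<in> V"
  have "(\<Sum>k\<in>V. w i k * (g k - g i)) = - (\<Sum>k\<in>V. w i k * (g i - g k))"
    unfolding sum_negf[symmetric] by (rule sum.cong) (simp_all add: algebra_simps)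
  moreover have "deg n w i powr (-r) \<noteq> 0" using dpow_pos[OF i] by simp
  ultimately show ?thesis unfolding lap_def by simp
qed

lemma mass_lap: "(\<Sum>i\<in>V. deg n w i powr r * lap n w r g i) = 0"
proof -
  have "(\<Sum>i\<in>V. deg n w i powr r * lap n w r g i) = (\<Sum>i\<in>V. \<Sum>k\<in>V. w i k * (g i - g k))"
  proof (rule sum.cong)
    fix i assume i: "i \<in> V"
    have "deg n w i powr r * deg n w i powr (-r) = 1" using deg_pos[OF i] by (rule pw_inv)
    then show "deg n w i powr r * lap n w r g i = (\<Sum>k\<in>V. w i k * (g i - g k))"
      unfolding lap_def by (simp add: mult.assoc[symmetric])
  qed simp
  also have "\<dots> = (\<Sum>i\<in>V. \<Sum>k\<in>V. w i k * g i) - (\<Sum>i\<in>V. \<Sum>k\<in>V. w i k * g k)"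
    by (simp add: right_diff_distrib sum_subtractf)
  also have "(\<Sum>i\<in>V. \<Sum>k\<in>V. w i k * g k) = (\<Sum>k\<in>V. \<Sum>i\<in>V. w i k * g k)" by (rule sum.swap)
  also have "\<dots> = (\<Sum>k\<in>V. \<Sum>i\<in>V. w k i * g k)"
    by (intro sum.cong refl) (simp add: wsym)
  finally show ?thesis by simp
qed

lemma dirichlet_exists:
  assumes S: "S \<subseteq> V" "V - S \<noteq> {}"
  shows "\<exists>\<nu>. (\<forall>i\<in>S. lap n w r \<nu> i = 1) \<and> (\<forall>i. i \<notin> S \<longrightarrow> \<nu> i = 0)"
proof -
  define A :: "real mat" where "A = Matrix.mat n n (\<lambda>(a,b). if Suc a \<in> S
     then (if a = b then deg n w (Suc a) else 0) - w (Suc a) (Suc b) else (if a = b then 1 else 0))"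
  have Ac: "A \<in> carrier_mat n n" unfolding A_def by simp
  have rowA: "vec_index (A *\<^sub>v x) a = (if Suc a \<in> S then deg n w (Suc a) * vec_index x a
      - (\<Sum>k\<in>V. w (Suc a) k * vec_index x (k - 1)) else vec_index x a)"
    if x: "x \<in> carrier_vec n" and a: "a < n" for x a
  proof -
    have "vec_index (A *\<^sub>v x) a = (\<Sum>b<n. index_mat A (a,b) * vec_index x b)"
      using Ac x a by (simp add: scalar_prod_def atLeast0LessThan)
    also have "\<dots> = (\<Sum>b<n. (if Suc a \<in> S
     then (if a = b then deg n w (Suc a) else 0) - w (Suc a) (Suc b) else (if a = b then 1 else 0)) * vec_index x b)"
      by (rule sum.cong) (simp_all add: A_def a)
    also have "\<dots> = (if Suc a \<in> S then deg n w (Suc a) * vec_index x a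
      - (\<Sum>k\<in>V. w (Suc a) k * vec_index x (k - 1)) else vec_index x a)"
    proof (cases "Suc a \<in> S")
      case True
      have "(\<Sum>b<n. ((if a = b then deg n w (Suc a) else 0) - w (Suc a) (Suc b)) * vec_index x b)
         = (\<Sum>b<n. (if a = b then deg n w (Suc a) * vec_index x b else 0)) - (\<Sum>b<n. w (Suc a) (Suc b) * vec_index x b)"
      proof -
        have "(\<Sum>b<n. ((if a = b then deg n w (Suc a) else 0) - w (Suc a) (Suc b)) * vec_index x b)
          = (\<Sum>b<n. (if a = b then deg n w (Suc a) * vec_index x b else 0) - w (Suc a) (Suc b) * vec_index x b)"
          by (rule sum.cong) (auto simp: left_diff_distrib)
        then show ?thesis by (simp only: sum_subtractf)
      qed
      also have "(\<Sum>b<n. (if a = b then deg n w (Suc a) * vec_index x b else 0)) = deg n w (Suc a) * vec_index x a"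
        using a by (simp add: sum.delta)
      also have "(\<Sum>b<n. w (Suc a) (Suc b) * vec_index x b) = (\<Sum>k\<in>V. w (Suc a) k * vec_index x (k - 1))"
        by (simp add: sum_V_shift)
      finally show ?thesis using True by simp
    next
      case False
      have "(\<Sum>b<n. (if a = b then 1 else 0) * vec_index x b) = (\<Sum>b<n. if a = b then vec_index x b else 0)"
        by (rule sum.cong) auto
      also have "\<dots> = vec_index x a" using a by (simp add: sum.delta)
      finally show ?thesis using False by simp
    qed
    finally show ?thesis .
  qed
  have inj: "x = 0\<^sub>v n" if x: "x \<in> carrier_vec n" and Ax: "A *\<^sub>v x = 0\<^sub>v n" for x
  proof -
    define h where "h = (\<lambda>i. vec_index x (i - 1))"
    have eq0: "vec_index (A *\<^sub>v x) a = 0" if "a < n" for a using Ax that by simp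
    have iV: "i - 1 < n" "Suc (i - 1) = i" if "i \<in> V" for i using that by (auto simp: Vset_def)
    have off: "\<forall>i\<in>V - S. h i = 0"
    proof
      fix i assume i: "i \<in> V - S"
      have "vec_index (A *\<^sub>v x) (i - 1) = 0" using eq0 iV i by blast
      then show "h i = 0" using rowA[OF x iV(1)] iV(2) i unfolding h_def by auto
    qed
    have harm: "\<forall>i\<in>S \<inter> V. (\<Sum>k\<in>V. w i k * (h k - h i)) = 0"
    proof
      fix i assume i: "i \<in> S \<inter> V"
      have "vec_index (A *\<^sub>v x) (i - 1) = 0" using eq0 iV i by blast
      then have "deg n w i * h i - (\<Sum>k\<in>V. w i k * h k) = 0"
        using rowA[OF x iV(1)] iV(2) i unfolding h_def by auto
      then show "(\<Sum>k\<in>V. w i k * (h k - h i)) = 0"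
        unfolding deg_def by (simp add: right_diff_distrib sum_subtractf sum_distrib_right)
    qed
    have "\<forall>i\<in>V. h i = 0" by (rule harm_zero[OF S(2) harm off])
    then show ?thesis
    proof -
      assume hz: "\<forall>i\<in>V. h i = 0"
      show ?thesis
      proof (rule eq_vecI)
        fix a assume a: "a < dim_vec (0\<^sub>v n :: real vec)"
        then have "Suc a \<in> V" by (simp add: Vset_def)
        then have "h (Suc a) = 0" using hz by blast
        then show "vec_index x a = vec_index (0\<^sub>v n) a" using a by (simp add: h_def)
      qed (use x in simp)
    qed
  qed
  have "Determinant.det A \<noteq> 0"
    using det_0_iff_vec_prod_zero_field[OF Ac] inj by blast
  then have "A \<in> Units (ring_mat TYPE(real) n ())" by (rule det_non_zero_imp_unit[OF Ac])
  then obtain B where B: "B \<in> carrier_mat n n" "A * B = 1\<^sub>m n"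
    by (auto simp: Units_def ring_mat_def)
  define bv :: "real vec" where "bv = Matrix.vec n (\<lambda>a. if Suc a \<in> S then deg n w (Suc a) powr r else 0)"
  define x where "x = B *\<^sub>v bv"
  have bvc: "bv \<in> carrier_vec n" unfolding bv_def by simp
  have xc: "x \<in> carrier_vec n" unfolding x_def using B(1) bvc by simp
  have Axb: "A *\<^sub>v x = bv" unfolding x_def
    using assoc_mult_mat_vec[OF Ac B(1) bvc, symmetric] B(2) bvc by simp
  define \<nu> where "\<nu> = (\<lambda>i. if i \<in> V then vec_index x (i - 1) else 0)"
  have iV: "i - 1 < n" "Suc (i - 1) = i" if "i \<in> V" for i using that by (auto simp: Vset_def)
  have row: "vec_index (A *\<^sub>v x) (i - 1) = vec_index bv (i - 1)" if "i \<in> V" for i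
    using Axb by simp
  have z: "\<forall>i. i \<notin> S \<longrightarrow> \<nu> i = 0"
  proof (intro allI impI)
    fix i assume i: "i \<notin> S"
    show "\<nu> i = 0"
    proof (cases "i \<in> V")
      case True
      have "vec_index bv (i - 1) = 0" using iV[OF True] i by (simp add: bv_def)
      then show ?thesis using row[OF True] rowA[OF xc iV(1)[OF True]] iV(2)[OF True] i True
        by (simp add: \<nu>_def)
    qed (simp add: \<nu>_def)
  qed
  have o: "\<forall>i\<in>S. lap n w r \<nu> i = 1"
  proof
    fix i assume iS: "i \<in> S"
    then have i: "i \<in> V" using S by blast
    have "vec_index bv (i - 1) = deg n w i powr r" using iV[OF i] iS by (simp add: bv_def)
    then have e: "deg n w i * vec_index x (i - 1) - (\<Sum>k\<in>V. w i k * vec_index x (k - 1)) = deg n w i powr r"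
      using row[OF i] rowA[OF xc iV(1)[OF i]] iV(2)[OF i] iS by simp
    have "(\<Sum>k\<in>V. w i k * \<nu> k) = (\<Sum>k\<in>V. w i k * vec_index x (k - 1))"
      by (rule sum.cong) (simp_all add: \<nu>_def)
    then have "lap n w r \<nu> i = deg n w i powr (-r) * deg n w i powr r"
      using e i unfolding lap_expand by (simp add: \<nu>_def)
    also have "\<dots> = 1" using pw_inv[OF deg_pos[OF i], of r] by (simp add: mult.commute)
    finally show "lap n w r \<nu> i = 1" .
  qed
  show ?thesis using o z by blast
qed

lemma eqmeas_props:
  assumes S: "S \<subseteq> V" "V - S \<noteq> {}"
  shows "(\<forall>i\<in>S. lap n w r (eqmeas n w r S) i = 1) \<and> (\<forall>i. i \<notin> S \<longrightarrow> eqmeas n w r S i = 0)"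
proof -
  let ?P = "\<lambda>\<nu>. (\<forall>i\<in>S. lap n w r \<nu> i = 1) \<and> (\<forall>i. i \<notin> S \<longrightarrow> \<nu> i = 0)"
  obtain \<nu> where \<nu>: "?P \<nu>" using dirichlet_exists[OF S] by blast
  have uniq: "\<mu> = \<nu>" if \<mu>: "?P \<mu>" for \<mu>
  proof -
    define h where "h = (\<lambda>x. \<mu> x - \<nu> x)"
    have harm: "\<forall>i\<in>S \<inter> V. (\<Sum>k\<in>V. w i k * (h k - h i)) = 0"
    proof
      fix i assume i: "i \<in> S \<inter> V"
      have "lap n w r h i = 0" unfolding h_def lap_diff using \<mu> \<nu> i by simp
      then show "(\<Sum>k\<in>V. w i k * (h k - h i)) = 0" using lap_zero_iff i by blast
    qed
    have off: "\<forall>i\<in>V - S. h i = 0" using \<mu> \<nu> by (simp add: h_def)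
    have hz: "\<forall>i\<in>V. h i = 0" by (rule harm_zero[OF S(2) harm off])
    show "\<mu> = \<nu>"
    proof
      fix x show "\<mu> x = \<nu> x"
      proof (cases "x \<in> V")
        case True then show ?thesis using hz by (simp add: h_def)
      next
        case False then have "x \<notin> S" using S(1) by blast
        then show ?thesis using \<mu> \<nu> by simp
      qed
    qed
  qed
  show ?thesis unfolding eqmeas_def by (rule theI[of ?P \<nu>]) (fact \<nu>, erule uniq)
qed

definition psys :: "(nat \<Rightarrow> real) \<Rightarrow> (nat \<Rightarrow> real) \<Rightarrow> bool" where
  "psys u p \<longleftrightarrow> (\<forall>i\<in>V. lap n w r p i = u i - avg n w r u i) \<and> mass n w r p = 0 \<and> (\<forall>i. i \<notin> V \<longrightarrow> p i = 0)"

lemma V_ne: "V \<noteq> {}" using n2 by (auto simp: Vset_def)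

lemma psys_unique:
  assumes p: "psys u p" and q: "psys u q"
  shows "p = q"
proof -
  define h where "h = (\<lambda>x. p x - q x)"
  have harm: "\<forall>i\<in>V. (\<Sum>k\<in>V. w i k * (h k - h i)) = 0"
  proof
    fix i assume i: "i \<in> V"
    have "lap n w r h i = 0" unfolding h_def lap_diff using p q i by (simp add: psys_def)
    then show "(\<Sum>k\<in>V. w i k * (h k - h i)) = 0" using lap_zero_iff i by blast
  qed
  obtain i0 where i0: "i0 \<in> V" "\<forall>k\<in>V. h i0 \<le> h k" using exists_min[of V h] V_ne by auto
  have cnn: "\<forall>i\<in>V. \<forall>k\<in>V. i \<noteq> k \<longrightarrow> 0 \<le> w i k" using wnn by auto
  have cpos: "\<forall>i\<in>V. \<forall>k\<in>V. 0 < w i k \<longrightarrow> 0 < w i k" by auto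
  have const: "\<forall>j\<in>V. h j = h i0"
    by (rule spread[OF cnn cpos i0]) (use harm in simp)
  have "mass n w r h = mass n w r p - mass n w r q"
    unfolding mass_def h_def by (simp add: right_diff_distrib sum_subtractf)
  then have m0: "mass n w r h = 0" using p q by (simp add: psys_def)
  have "mass n w r h = (\<Sum>i\<in>V. deg n w i powr r * h i0)"
    unfolding mass_def by (rule sum.cong) (simp_all add: const)
  also have "\<dots> = vol n w r * h i0" unfolding vol_def by (simp add: sum_distrib_right)
  finally have "h i0 = 0" using m0 vol_pos by simp
  then have hz: "\<forall>j\<in>V. h j = 0" using const by simp
  show "p = q"
  proof
    fix x show "p x = q x"
    proof (cases "x \<in> V")
      case True then show ?thesis using hz by (simp add: h_def)
    next
      case False then show ?thesis using p q by (simp add: psys_def)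
    qed
  qed
qed

definition cv :: "nat \<Rightarrow> real" where "cv j = deg n w j powr r / vol n w r"

definition cand :: "(nat \<Rightarrow> real) \<Rightarrow> nat \<Rightarrow> real" where
  "cand u = (\<lambda>i. if i \<in> V then (\<Sum>j\<in>V. (- (u j * cv j)) * fj n w r j i) else 0)"

lemma nu: "j \<in> V \<Longrightarrow> (\<forall>i\<in>V - {j}. lap n w r (eqmeas n w r (V - {j})) i = 1)
   \<and> (\<forall>i. i \<notin> V - {j} \<longrightarrow> eqmeas n w r (V - {j}) i = 0)"
  by (rule eqmeas_props) auto

lemma nu_j:
  assumes j: "j \<in> V"
  shows "deg n w j powr r * lap n w r (eqmeas n w r (V - {j})) j = - (vol n w r - deg n w j powr r)"
proof -
  let ?v = "eqmeas n w r (V - {j})"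
  have "0 = (\<Sum>i\<in>V. deg n w i powr r * lap n w r ?v i)" using mass_lap by simp
  also have "\<dots> = deg n w j powr r * lap n w r ?v j + (\<Sum>i\<in>V - {j}. deg n w i powr r * lap n w r ?v i)"
    using j by (simp add: sum.remove)
  also have "(\<Sum>i\<in>V - {j}. deg n w i powr r * lap n w r ?v i) = (\<Sum>i\<in>V - {j}. deg n w i powr r)"
    using nu[OF j] by (intro sum.cong) auto
  finally have a: "0 = deg n w j powr r * lap n w r ?v j + (\<Sum>i\<in>V - {j}. deg n w i powr r)" .
  have "vol n w r = deg n w j powr r + (\<Sum>i\<in>V - {j}. deg n w i powr r)"
    unfolding vol_def using j by (simp add: sum.remove)
  with a show ?thesis by simp
qed

lemma fj_fun: "fj n w r j = (\<lambda>i. eqmeas n w r (V - {j}) i - avg n w r (eqmeas n w r (V - {j})) i)"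
  by (simp add: fj_def Let_def)

lemma lap_fj:
  assumes x: "x \<in> V"
  shows "lap n w r (fj n w r j) x = lap n w r (eqmeas n w r (V - {j})) x"
proof -
  let ?v = "eqmeas n w r (V - {j})"
  have "lap n w r (avg n w r ?v) x = 0"
    by (rule lap_const[where c = "mass n w r ?v / vol n w r", OF x]) (simp add: avg_def)
  then show ?thesis unfolding fj_fun lap_diff by simp
qed

lemma mass_fj:
  assumes j: "j \<in> V"
  shows "mass n w r (fj n w r j) = 0"
proof -
  let ?v = "eqmeas n w r (V - {j})"
  let ?M = "mass n w r ?v"
  have "mass n w r (fj n w r j) = (\<Sum>i\<in>V. deg n w i powr r * ?v i - deg n w i powr r * (?M / vol n w r))"
    by (subst mass_def, rule sum.cong) (simp_all add: fj_fun avg_def right_diff_distrib)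
  also have "\<dots> = ?M - vol n w r * (?M / vol n w r)"
    by (simp only: sum_subtractf sum_distrib_right[symmetric] mass_def[symmetric] vol_def[symmetric] mult.commute)
  also have "\<dots> = 0" using vol_pos by simp
  finally show ?thesis .
qed

lemma sum_ucv: "(\<Sum>j\<in>V. u j * cv j) = mass n w r u / vol n w r"
  unfolding cv_def mass_def by (simp add: sum_divide_distrib mult.commute)

lemma cand_sys: "psys u (cand u)"
proof -
  have L: "lap n w r (cand u) x = u x - avg n w r u x" if x: "x \<in> V" for x
  proof -
    let ?a = "\<lambda>j. - (u j * cv j)"
    have "lap n w r (cand u) x = lap n w r (\<lambda>i. \<Sum>j\<in>V. ?a j * fj n w r j i) x"
      by (rule lap_cong[OF x]) (simp add: cand_def)
    also have "\<dots> = (\<Sum>j\<in>V. ?a j * lap n w r (fj n w r j) x)" by (rule lap_lin)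
    also have "\<dots> = (\<Sum>j\<in>V. ?a j * lap n w r (eqmeas n w r (V - {j})) x)"
      by (rule sum.cong) (simp_all add: lap_fj[OF x])
    also have "\<dots> = ?a x * lap n w r (eqmeas n w r (V - {x})) x
        + (\<Sum>j\<in>V - {x}. ?a j * lap n w r (eqmeas n w r (V - {j})) x)"
      using x by (simp add: sum.remove)
    also have "(\<Sum>j\<in>V - {x}. ?a j * lap n w r (eqmeas n w r (V - {j})) x) = (\<Sum>j\<in>V - {x}. ?a j)"
    proof (rule sum.cong)
      fix j assume j: "j \<in> V - {x}"
      then have "x \<in> V - {j}" using x by auto
      then show "?a j * lap n w r (eqmeas n w r (V - {j})) x = ?a j" using nu[of j] j by simp
    qed simp
    also have "(\<Sum>j\<in>V - {x}. ?a j) = (\<Sum>j\<in>V. ?a j) - ?a x"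
      using x by (simp add: sum.remove)
    also have "(\<Sum>j\<in>V. ?a j) = - (mass n w r u / vol n w r)"
      using sum_ucv[of u] by (simp add: sum_negf)
    also have "?a x * lap n w r (eqmeas n w r (V - {x})) x
        = - (u x / vol n w r) * (deg n w x powr r * lap n w r (eqmeas n w r (V - {x})) x)"
      by (simp add: cv_def)
    also have "\<dots> = - (u x / vol n w r) * (- (vol n w r - deg n w x powr r))"
      by (subst nu_j[OF x]) (rule refl)
    also have "\<dots> = (u x / vol n w r) * (vol n w r - deg n w x powr r)"
      by (rule minus_mult_minus)
    finally have "lap n w r (cand u) x = (u x / vol n w r) * (vol n w r - deg n w x powr r)
         + (- (mass n w r u / vol n w r) + u x * (deg n w x powr r / vol n w r))"
      by (simp add: cv_def)
    also have "\<dots> = u x - mass n w r u / vol n w r"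
    proof -
      have "(u x / vol n w r) * (vol n w r - deg n w x powr r) = u x - u x * (deg n w x powr r / vol n w r)"
        using vol_pos by (simp add: right_diff_distrib)
      then show ?thesis by linarith
    qed
    finally show ?thesis using x by (simp add: avg_def)
  qed
  have M: "mass n w r (cand u) = 0"
  proof -
    have "mass n w r (cand u) = (\<Sum>i\<in>V. \<Sum>j\<in>V. - (u j * cv j) * (deg n w i powr r * fj n w r j i))"
      unfolding mass_def cand_def by (rule sum.cong) (simp_all add: sum_distrib_left mult.left_commute)
    also have "\<dots> = (\<Sum>j\<in>V. \<Sum>i\<in>V. - (u j * cv j) * (deg n w i powr r * fj n w r j i))"
      by (rule sum.swap)
    also have "\<dots> = (\<Sum>j\<in>V. - (u j * cv j) * mass n w r (fj n w r j))"
      unfolding mass_def by (simp add: sum_distrib_left)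
    also have "\<dots> = 0" by (simp add: mass_fj)
    finally show ?thesis .
  qed
  show ?thesis unfolding psys_def using L M by (simp add: cand_def)
qed

lemma phi_cand: "phi n w r u = cand u"
proof -
  have "phi n w r u = (THE p. psys u p)" unfolding phi_def psys_def by simp
  also have "\<dots> = cand u"
    by (rule the_equality[of "psys u" "cand u", OF cand_sys]) (use psys_unique cand_sys in blast)
  finally show ?thesis .
qed

lemma sum_cf: assumes i: "i \<in> V" shows "(\<Sum>j\<in>V. cv j * fj n w r j i) = 0"
proof -
  have "psys (\<lambda>_. 1) (\<lambda>_. 0)"
  proof -
    have "mass n w r (\<lambda>_. 1) = vol n w r" by (simp add: mass_def vol_def)
    then have "\<forall>i\<in>V. avg n w r (\<lambda>_. 1) i = 1" using vol_pos by (simp add: avg_def)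
    moreover have "\<forall>i\<in>V. lap n w r (\<lambda>_. 0) i = 0" by (simp add: lap_def)
    ultimately show ?thesis unfolding psys_def by (simp add: mass_def)
  qed
  then have "cand (\<lambda>_. 1) = (\<lambda>_. 0)" using psys_unique cand_sys by blast
  then have "cand (\<lambda>_. 1) i = 0" by simp
  then have "(\<Sum>j\<in>V. - (cv j * fj n w r j i)) = 0" using i by (simp add: cand_def)
  then show ?thesis by (simp add: sum_negf)
qed

lemma main:
  assumes cnn: "\<forall>i\<in>V. \<forall>k\<in>V. i \<noteq> k \<longrightarrow> 0 \<le> deg n w i powr (-r) * w i k + \<gamma> * cv k * fj n w r k i"
    and cpos: "\<forall>i\<in>V. \<forall>k\<in>V. 0 < w i k \<longrightarrow> 0 < deg n w i powr (-r) * w i k + \<gamma> * cv k * fj n w r k i"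
    and V': "V' \<subset> V"
    and hL: "\<forall>i\<in>V'. Lop n w r \<gamma> u i \<ge> Lop n w r \<gamma> v i"
    and hb: "\<forall>i\<in>V - V'. u i \<ge> v i"
  shows "\<forall>i\<in>V. u i \<ge> v i"
proof -
  define z where "z = (\<lambda>i. u i - v i)"
  define C where "C = (\<lambda>i k. deg n w i powr (-r) * w i k + \<gamma> * cv k * fj n w r k i)"
  have key: "Lop n w r \<gamma> u i - Lop n w r \<gamma> v i = - (\<Sum>k\<in>V. C i k * (z k - z i))" if i: "i \<in> V" for i
  proof -
    have e1: "lap n w r u i - lap n w r v i = - (\<Sum>k\<in>V. deg n w i powr (-r) * w i k * (z k - z i))"
    proof -
      have "lap n w r u i - lap n w r v i = lap n w r z i" unfolding z_def lap_diff ..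
      also have "\<dots> = (\<Sum>k\<in>V. deg n w i powr (-r) * (w i k * (z i - z k)))"
        unfolding lap_def by (simp add: sum_distrib_left)
      also have "\<dots> = (\<Sum>k\<in>V. - (deg n w i powr (-r) * w i k * (z k - z i)))"
        by (rule sum.cong) (simp_all add: algebra_simps)
      also have "\<dots> = - (\<Sum>k\<in>V. deg n w i powr (-r) * w i k * (z k - z i))" by (rule sum_negf)
      finally show ?thesis .
    qed
    have e2: "cand u i - cand v i = - (\<Sum>k\<in>V. cv k * fj n w r k i * (z k - z i))"
    proof -
      have "cand u i - cand v i = (\<Sum>k\<in>V. - (z k * (cv k * fj n w r k i)))"
        using i unfolding cand_def z_def by (simp add: sum_subtractf[symmetric] algebra_simps)
      also have "\<dots> = - (\<Sum>k\<in>V. z k * (cv k * fj n w r k i))" by (rule sum_negf)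
      also have "(\<Sum>k\<in>V. z k * (cv k * fj n w r k i)) = (\<Sum>k\<in>V. cv k * fj n w r k i * (z k - z i))"
      proof -
        have "(\<Sum>k\<in>V. cv k * fj n w r k i * (z k - z i))
            = (\<Sum>k\<in>V. z k * (cv k * fj n w r k i)) - (\<Sum>k\<in>V. cv k * fj n w r k i) * z i"
          by (simp add: sum_subtractf sum_distrib_right sum_distrib_left algebra_simps)
        then show ?thesis using sum_cf[OF i] by simp
      qed
      finally show ?thesis .
    qed
    have sumC: "(\<Sum>k\<in>V. C i k * (z k - z i)) = (\<Sum>k\<in>V. deg n w i powr (-r) * w i k * (z k - z i))
        + \<gamma> * (\<Sum>k\<in>V. cv k * fj n w r k i * (z k - z i))"
      unfolding C_def by (simp add: sum.distrib sum_distrib_left distrib_right mult.assoc)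
    have lin: "Lop n w r \<gamma> u i - Lop n w r \<gamma> v i = (lap n w r u i - lap n w r v i) + \<gamma> * (cand u i - cand v i)"
      unfolding Lop_def phi_cand by (simp add: algebra_simps)
    show ?thesis unfolding lin e1 e2 sumC by (simp only: minus_add_distrib mult_minus_right)
  qed
  have sup: "\<forall>i\<in>V' \<inter> V. (\<Sum>k\<in>V. C i k * (z k - z i)) \<le> 0"
  proof
    fix i assume i: "i \<in> V' \<inter> V"
    have "Lop n w r \<gamma> u i - Lop n w r \<gamma> v i \<ge> 0" using hL i by simp
    then show "(\<Sum>k\<in>V. C i k * (z k - z i)) \<le> 0" using key[of i] i by simp
  qed
  have T: "V - V' \<noteq> {}" using V' by blast
  have bd: "\<forall>i\<in>V - V'. 0 \<le> z i" using hb by (simp add: z_def)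
  have cnn': "\<forall>i\<in>V. \<forall>k\<in>V. i \<noteq> k \<longrightarrow> 0 \<le> C i k" using cnn by (simp add: C_def)
  have cpos': "\<forall>i\<in>V. \<forall>k\<in>V. 0 < w i k \<longrightarrow> 0 < C i k" using cpos by (simp add: C_def)
  have "\<forall>i\<in>V. 0 \<le> z i" by (rule maxprin[OF cnn' cpos' T sup bd])
  then show ?thesis by (simp add: z_def)
qed

end

theorem lemma6p25:
  fixes n :: nat and w :: "nat \<Rightarrow> nat \<Rightarrow> real" and r \<gamma> :: real
    and V' :: "nat set" and u v :: "nat \<Rightarrow> real"
  assumes "0 \<le> r" and "r \<le> 1"
    and "\<gamma> \<ge> 0"
    and "classC n w r \<gamma>"
    and "V' \<subset> Vset n"
    and "\<forall>i\<in>V'. Lop n w r \<gamma> u i \<ge> Lop n w r \<gamma> v i"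
    and "\<forall>i\<in>Vset n - V'. u i \<ge> v i"
  shows "\<forall>i\<in>Vset n. u i \<ge> v i"
proof -
  note cC = assms(4)
  have G: "is_graph n w" using cC by (auto simp: classC_def classC0_def split: if_splits)
  interpret gr n w r by (rule gr.intro[OF G])
  have dp: "deg n w i powr (-r) > 0" if "i \<in> Vset n" for i using dpow_pos[OF that] .
  have cvp: "cv k > 0" if "k \<in> Vset n" for k using dpow_pos[OF that, of r] vol_pos by (simp add: cv_def)
  have conds: "(\<forall>i\<in>Vset n. \<forall>k\<in>Vset n. i \<noteq> k \<longrightarrow> 0 \<le> deg n w i powr (-r) * w i k + \<gamma> * cv k * fj n w r k i)
    \<and> (\<forall>i\<in>Vset n. \<forall>k\<in>Vset n. 0 < w i k \<longrightarrow> 0 < deg n w i powr (-r) * w i k + \<gamma> * cv k * fj n w r k i)"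
  proof (cases "\<gamma> = 0")
    case True
    have a: "\<forall>i\<in>Vset n. \<forall>k\<in>Vset n. i \<noteq> k \<longrightarrow> 0 \<le> deg n w i powr (-r) * w i k + \<gamma> * cv k * fj n w r k i"
    proof (intro ballI impI)
      fix i k assume i: "i \<in> Vset n" and k: "k \<in> Vset n" and "i \<noteq> k"
      have "0 \<le> deg n w i powr (-r) * w i k" using dp[OF i] wnn[OF i k] by simp
      then show "0 \<le> deg n w i powr (-r) * w i k + \<gamma> * cv k * fj n w r k i" using True by simp
    qed
    have b: "\<forall>i\<in>Vset n. \<forall>k\<in>Vset n. 0 < w i k \<longrightarrow> 0 < deg n w i powr (-r) * w i k + \<gamma> * cv k * fj n w r k i"
    proof (intro ballI impI)
      fix i k assume i: "i \<in> Vset n" and k: "k \<in> Vset n" and wk: "0 < w i k"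
      have "0 < deg n w i powr (-r) * w i k" using dp[OF i] wk by simp
      then show "0 < deg n w i powr (-r) * w i k + \<gamma> * cv k * fj n w r k i" using True by simp
    qed
    show ?thesis using a b by blast
  next
    case False
    then have gp: "\<gamma> > 0" using assms(3) by simp
    have C0: "\<forall>j\<in>Vset n. \<forall>i\<in>Vset n. i \<noteq> j \<longrightarrow> w i j > 0 \<or> fj n w r j i \<ge> 0"
      using cC False by (simp add: classC_def classC0_def)
    have C1: "\<forall>j\<in>Vset n. \<forall>i\<in>Vset n. i \<noteq> j \<longrightarrow> w i j = 0 \<or>
        deg n w i powr (- r) * w i j + \<gamma> * deg n w j powr r / vol n w r * fj n w r j i > 0"
      using cC False by (simp add: classC_def)
    have eqc: "\<gamma> * deg n w k powr r / vol n w r * fj n w r k i = \<gamma> * cv k * fj n w r k i" for i k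
      by (simp add: cv_def)
    have pos: "0 < deg n w i powr (-r) * w i k + \<gamma> * cv k * fj n w r k i"
      if i: "i \<in> Vset n" and k: "k \<in> Vset n" and wk: "0 < w i k" for i k
    proof -
      have "i \<noteq> k" using wdiag[OF i] wk by auto
      then have "w i k = 0 \<or> deg n w i powr (- r) * w i k + \<gamma> * deg n w k powr r / vol n w r * fj n w r k i > 0"
        using C1 i k by blast
      then show ?thesis using wk eqc[of k i] by auto
    qed
    have nn: "0 \<le> deg n w i powr (-r) * w i k + \<gamma> * cv k * fj n w r k i"
      if i: "i \<in> Vset n" and k: "k \<in> Vset n" and ik: "i \<noteq> k" for i k
    proof (cases "0 < w i k")
      case True then show ?thesis using pos[OF i k] by simp
    next
      case False
      then have w0: "w i k = 0" using wnn[OF i k] by simp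
      have "fj n w r k i \<ge> 0" using C0 i k ik False by blast
      then have "0 \<le> \<gamma> * cv k * fj n w r k i" using gp cvp[OF k] by simp
      then show ?thesis using w0 by simp
    qed
    show ?thesis using pos nn by blast
  qed
  show ?thesis by (rule main[OF conjunct1[OF conds] conjunct2[OF conds] assms(5) assms(6) assms(7)])
qed

end
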